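(* Let $d$ be sufficiently large and $\delta\in(0,1)$. Fix $\mathbf{A}\in\{-1,1\}^{(d/2)\times d}$. With probability at least $1-d^{-\omega(1)}$ over independent uniform $\mathbf{v}_1,\dots,\mathbf{v}_N\in\frac1{\sqrt d}\{-1,1\}^d$, $$\min_{\mathbf{x}\in\mathbb{B}^d}F_{\mathbf{A},V}(\mathbf{x})\le-\frac{1}{\sqrt dL}\cdot\frac{1}{\sqrt N\log^2 d}.$$
   Context: $F_{\mathbf{A},V}(\mathbf{x})=\frac{1}{\sqrt dL}\max\{L\|\mathbf{A}\mathbf{x}\|_\infty-1,\max_{i\in[N]}(\langle\mathbf{v}_i,\mathbf{x}\rangle-i\gamma)\}$ with $\gamma=\log^2 d/d^{\delta/4}$, $N=d^{\delta/6}/\log^4 d$, $L=\exp(\log^5 d)$; $\mathbb{B}^d$ is the unit ball. *)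

theory Defs
  imports "HOL-Probability.Probability"
begin

text \<open>Parameters (log = natural logarithm).\<close>
definition gam :: "nat \<Rightarrow> real \<Rightarrow> real" where
  "gam d \<delta> = (ln (real d))^2 / (real d) powr (\<delta>/4)"

definition NN :: "nat \<Rightarrow> real \<Rightarrow> nat" where
  "NN d \<delta> = nat \<lfloor>(real d) powr (\<delta>/6) / (ln (real d))^4\<rfloor>"

definition LL :: "nat \<Rightarrow> real" where
  "LL d = exp ((ln (real d))^5)"

text \<open>Vectors of R^d are functions nat => real, only coordinates < d matter.
  The d/2 x d matrix A is a function nat => nat => real (rows < d div 2, columns < d).
  The random vectors v_i = s_i / sqrt d, i in {1..N}, with s_i a sign vector.\<close>

definition sign_matrices :: "nat \<Rightarrow> (nat \<Rightarrow> nat \<Rightarrow> real) set" where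
  "sign_matrices d = {A. \<forall>j<d div 2. \<forall>k<d. A j k \<in> {-1, 1}}"

definition sign_samples :: "nat \<Rightarrow> nat \<Rightarrow> (nat \<Rightarrow> nat \<Rightarrow> real) set" where
  "sign_samples d N = PiE {1..N} (\<lambda>_. PiE {..<d} (\<lambda>_. {-1, 1}))"

definition vvec :: "nat \<Rightarrow> (nat \<Rightarrow> nat \<Rightarrow> real) \<Rightarrow> nat \<Rightarrow> nat \<Rightarrow> real" where
  "vvec d s i k = s i k / sqrt (real d)"

definition infnorm_Ax :: "nat \<Rightarrow> (nat \<Rightarrow> nat \<Rightarrow> real) \<Rightarrow> (nat \<Rightarrow> real) \<Rightarrow> real" where
  "infnorm_Ax d A x = Max ((\<lambda>j. \<bar>\<Sum>k<d. A j k * x k\<bar>) ` {..<d div 2})"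

definition FAV :: "nat \<Rightarrow> real \<Rightarrow> (nat \<Rightarrow> nat \<Rightarrow> real) \<Rightarrow> (nat \<Rightarrow> nat \<Rightarrow> real)
    \<Rightarrow> (nat \<Rightarrow> real) \<Rightarrow> real" where
  "FAV d \<delta> A s x = 1 / (sqrt (real d) * LL d) *
     max (LL d * infnorm_Ax d A x - 1)
         (Max ((\<lambda>i. (\<Sum>k<d. vvec d s i k * x k) - real i * gam d \<delta>) ` {1..NN d \<delta>}))"

definition unit_ball :: "nat \<Rightarrow> (nat \<Rightarrow> real) set" where
  "unit_ball d = {x. (\<Sum>k<d. (x k)^2) \<le> 1}"

end

theory Submission
  imports Defs "HOL-Real_Asymp.Real_Asymp"
begin


definition ip :: "nat \<Rightarrow> (nat \<Rightarrow> real) \<Rightarrow> (nat \<Rightarrow> real) \<Rightarrow> real" where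
  "ip d u v = (\<Sum>k<d. u k * v k)"

lemma ip_sym: "ip d u v = ip d v u"
  by (simp add: ip_def mult.commute)

lemma ip_sum_right: "ip d u (\<lambda>k. \<Sum>c\<in>C. f c * w c k) = (\<Sum>c\<in>C. f c * ip d u (w c))"
  by (simp add: ip_def sum_distrib_left sum_distrib_right algebra_simps sum.swap[of _ C])

lemma ip_sum_left: "ip d (\<lambda>k. \<Sum>c\<in>C. f c * w c k) u = (\<Sum>c\<in>C. f c * ip d (w c) u)"
  using ip_sum_right[where d=d and u=u and C=C and f=f and w=w] by (simp add: ip_sym)

lemma ip_diff_right: "ip d u (\<lambda>k. v k - w k) = ip d u v - ip d u w"
  by (simp add: ip_def algebra_simps sum_subtractf)

lemma ip_scale_right: "ip d u (\<lambda>k. a * v k) = a * ip d u v"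
  by (simp add: ip_def sum_distrib_left algebra_simps)

lemma ip_self_nonneg: "ip d u u \<ge> 0"
  by (simp add: ip_def sum_nonneg)

lemma ip_self_zero: "ip d u u = 0 \<Longrightarrow> k < d \<Longrightarrow> u k = 0"
  unfolding ip_def by (subst (asm) sum_nonneg_eq_0_iff) auto

definition orthonormal :: "nat \<Rightarrow> (nat \<Rightarrow> real) list \<Rightarrow> bool" where
  "orthonormal d qs \<longleftrightarrow> (\<forall>a<length qs. \<forall>b<length qs. ip d (qs!a) (qs!b) = (if a = b then 1 else 0))"

definition inspan :: "nat \<Rightarrow> (nat \<Rightarrow> real) list \<Rightarrow> (nat \<Rightarrow> real) \<Rightarrow> bool" where
  "inspan d qs u \<longleftrightarrow> (\<forall>k<d. u k = (\<Sum>c<length qs. ip d (qs!c) u * (qs!c) k))"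

lemma ortho_sum_ip:
  assumes "orthonormal d qs" "b < length qs"
  shows "(\<Sum>c<length qs. f c * ip d (qs!b) (qs!c)) = f b"
proof -
  have "(\<Sum>c<length qs. f c * ip d (qs!b) (qs!c)) = (\<Sum>c<length qs. if c = b then f c else 0)"
    using assms by (intro sum.cong) (auto simp: orthonormal_def)
  also have "\<dots> = f b" using assms by simp
  finally show ?thesis .
qed

lemma gram_schmidt:
  "\<exists>qs. length qs \<le> length rs \<and> orthonormal d qs \<and> (\<forall>u\<in>set rs. inspan d qs u)"
proof (induction rs)
  case Nil
  show ?case by (rule exI[of _ "[]"]) (simp add: orthonormal_def)
next
  case (Cons a rs)
  then obtain qs where len: "length qs \<le> length rs" and on: "orthonormal d qs"
    and sp: "\<forall>u\<in>set rs. inspan d qs u" by blast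
  define n where "n = length qs"
  define res where "res = (\<lambda>k. a k - (\<Sum>c<n. ip d (qs!c) a * (qs!c) k))"
  have res_orth: "ip d (qs!b) res = 0" if "b < n" for b
  proof -
    have "ip d (qs!b) res = ip d (qs!b) a - (\<Sum>c<n. ip d (qs!c) a * ip d (qs!b) (qs!c))"
      unfolding res_def by (simp add: ip_diff_right ip_sum_right)
    also have "(\<Sum>c<n. ip d (qs!c) a * ip d (qs!b) (qs!c)) = ip d (qs!b) a"
      using ortho_sum_ip[OF on, of b "\<lambda>c. ip d (qs!c) a"] that by (simp add: n_def)
    finally show ?thesis by simp
  qed
  show ?case
  proof (cases "ip d res res = 0")
    case True
    have "inspan d qs a"
      unfolding inspan_def
    proof (intro allI impI)
      fix k assume "k < d"
      then have "res k = 0" using ip_self_zero[OF True] by simp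
      then show "a k = (\<Sum>c<length qs. ip d (qs!c) a * (qs!c) k)" by (simp add: res_def n_def)
    qed
    then show ?thesis using len on sp by (intro exI[of _ qs]) auto
  next
    case False
    define nr where "nr = sqrt (ip d res res)"
    have nrpos: "nr > 0" using False ip_self_nonneg[of d res] by (simp add: nr_def)
    define q where "q = (\<lambda>k. res k / nr)"
    have qq: "ip d q q = 1"
    proof -
      have "ip d q q = ip d res res / nr^2" by (simp add: q_def ip_def power2_eq_square sum_divide_distrib)
      also have "nr^2 = ip d res res" unfolding nr_def using ip_self_nonneg[of d res] by simp
      finally show ?thesis using False by simp
    qed
    have qorth: "ip d (qs!b) q = 0" if "b < n" for b
      using res_orth[OF that] by (simp add: q_def ip_def sum_divide_distrib[symmetric])
    define qs' where "qs' = qs @ [q]"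
    have nth': "qs'!c = (if c < n then qs!c else q)" if "c < Suc n" for c
      using that by (auto simp: qs'_def nth_append n_def)
    have on': "orthonormal d qs'"
      unfolding orthonormal_def
    proof (intro allI impI)
      fix b c assume b: "b < length qs'" and c: "c < length qs'"
      then have b': "b < Suc n" and c': "c < Suc n" by (auto simp: qs'_def n_def)
      show "ip d (qs'!b) (qs'!c) = (if b = c then 1 else 0)"
        using on b' c' qorth qq unfolding nth'[OF b'] nth'[OF c']
        by (auto simp: orthonormal_def n_def ip_sym less_Suc_eq)
    qed
    have sumsplit: "(\<Sum>c<length qs'. f (qs'!c)) = (\<Sum>c<n. f (qs!c)) + f q" for f :: "_ \<Rightarrow> real"
      by (simp add: qs'_def n_def nth_append)
    have sp': "inspan d qs' u" if "u \<in> set rs" for u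
    proof -
      have u: "inspan d qs u" using sp that by auto
      have "ip d q u = 0"
      proof -
        have "ip d q u = ip d q (\<lambda>k. \<Sum>c<n. ip d (qs!c) u * (qs!c) k)"
          using u unfolding inspan_def ip_def n_def by (intro sum.cong) auto
        also have "\<dots> = 0" by (simp add: ip_sum_right ip_sym[of d q] qorth)
        finally show ?thesis .
      qed
      then show ?thesis using u unfolding inspan_def
        using sumsplit[of "\<lambda>q. ip d q u * q _"] by (simp add: n_def)
    qed
    have spa: "inspan d qs' a"
      unfolding inspan_def
    proof (intro allI impI)
      fix k assume "k < d"
      have "ip d q a = ip d q res"
      proof -
        have "ip d q res = ip d q a - (\<Sum>c<n. ip d (qs!c) a * ip d q (qs!c))"
          unfolding res_def by (simp add: ip_diff_right ip_sum_right)
        also have "(\<Sum>c<n. ip d (qs!c) a * ip d q (qs!c)) = 0"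
          by (intro sum.neutral) (auto simp: ip_sym[of d q] qorth)
        finally show ?thesis by simp
      qed
      also have "ip d q res = nr" 
      proof -
        have "ip d q res = ip d res res / nr" by (simp add: q_def ip_def sum_divide_distrib)
        also have "ip d res res = nr * nr" unfolding nr_def using ip_self_nonneg[of d res] by simp
        finally show ?thesis using nrpos by simp
      qed
      finally have "ip d q a * q k = res k" using nrpos by (simp add: q_def)
      then show "a k = (\<Sum>c<length qs'. ip d (qs'!c) a * (qs'!c) k)"
        using sumsplit[of "\<lambda>q. ip d q a * q k"] by (simp add: res_def n_def)
    qed
    show ?thesis using len on' sp' spa by (intro exI[of _ qs']) (auto simp: qs'_def n_def)
  qed
qed

definition Pv :: "nat \<Rightarrow> (nat \<Rightarrow> real) list \<Rightarrow> (nat \<Rightarrow> real) \<Rightarrow> nat \<Rightarrow> real" where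
  "Pv d qs y = (\<lambda>k. y k - (\<Sum>c<length qs. ip d (qs!c) y * (qs!c) k))"

lemma Pv_ip: "ip d u (Pv d qs y) = ip d u y - (\<Sum>c<length qs. ip d (qs!c) u * ip d (qs!c) y)"
  unfolding Pv_def ip_diff_right ip_sum_right by (simp add: ip_sym mult.commute)

lemma Pv_orth:
  assumes "orthonormal d qs" "b < length qs"
  shows "ip d (qs!b) (Pv d qs y) = 0"
proof -
  have "(\<Sum>c<length qs. ip d (qs!c) (qs!b) * ip d (qs!c) y) = ip d (qs!b) y"
    using ortho_sum_ip[OF assms, of "\<lambda>c. ip d (qs!c) y"] by (simp add: ip_sym mult.commute)
  then show ?thesis by (simp add: Pv_ip)
qed

lemma Pv_Pv:
  assumes "orthonormal d qs"
  shows "ip d (Pv d qs y) (Pv d qs z) = ip d y (Pv d qs z)"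
proof -
  have "ip d (Pv d qs y) (Pv d qs z) = ip d (Pv d qs z) (Pv d qs y)" by (rule ip_sym)
  also have "\<dots> = ip d (Pv d qs z) y - (\<Sum>c<length qs. ip d (qs!c) (Pv d qs z) * ip d (qs!c) y)"
    by (rule Pv_ip)
  also have "(\<Sum>c<length qs. ip d (qs!c) (Pv d qs z) * ip d (qs!c) y) = 0"
    using Pv_orth[OF assms] by simp
  finally show ?thesis by (simp add: ip_sym)
qed

lemma bessel:
  assumes "orthonormal d qs"
  shows "(\<Sum>c<length qs. (ip d (qs!c) y)^2) \<le> ip d y y"
proof -
  have "0 \<le> ip d (Pv d qs y) (Pv d qs y)" by (rule ip_self_nonneg)
  also have "\<dots> = ip d y y - (\<Sum>c<length qs. (ip d (qs!c) y)^2)"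
    using Pv_Pv[OF assms] Pv_ip[of d y qs y] by (simp add: power2_eq_square)
  finally show ?thesis by simp
qed

lemma Pv_self:
  assumes "orthonormal d qs"
  shows "ip d y (Pv d qs y) = ip d y y - (\<Sum>c<length qs. (ip d (qs!c) y)^2)"
  using Pv_ip[of d y qs y] by (simp add: power2_eq_square)

lemma inspan_Pv:
  assumes "inspan d qs u"
  shows "ip d u (Pv d qs y) = 0"
proof -
  have "ip d u y = ip d (\<lambda>k. \<Sum>c<length qs. ip d (qs!c) u * (qs!c) k) y"
    using assms unfolding inspan_def ip_def by (intro sum.cong) auto
  also have "\<dots> = (\<Sum>c<length qs. ip d (qs!c) u * ip d (qs!c) y)"
    by (simp add: ip_sum_left)
  finally show ?thesis by (simp add: Pv_ip)
qed

lemma ortho_comb_norm: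
  assumes "orthonormal d qs"
  shows "ip d (\<lambda>k. \<Sum>c<length qs. \<beta> c * (qs!c) k) (\<lambda>k. \<Sum>c<length qs. \<beta> c * (qs!c) k)
     = (\<Sum>c<length qs. (\<beta> c)^2)"
proof -
  have "ip d (\<lambda>k. \<Sum>c<length qs. \<beta> c * (qs!c) k) (\<lambda>k. \<Sum>c<length qs. \<beta> c * (qs!c) k)
      = (\<Sum>b<length qs. \<beta> b * (\<Sum>c<length qs. \<beta> c * ip d (qs!b) (qs!c)))"
    by (simp add: ip_sum_left ip_sum_right)
  also have "\<dots> = (\<Sum>b<length qs. \<beta> b * \<beta> b)"
    using ortho_sum_ip[OF assms] by (intro sum.cong) auto
  finally show ?thesis by (simp add: power2_eq_square)
qed



lemma prob_Pi_cond:
  fixes p :: "'a \<Rightarrow> 'b pmf"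
  assumes fin: "finite I" and JI: "J \<subseteq> I"
    and bnd: "\<And>g. g \<in> set_pmf (Pi_pmf (I - J) dflt p) \<Longrightarrow>
        measure_pmf.prob (Pi_pmf J dflt p) {f. (\<lambda>x. if x \<in> J then f x else g x) \<in> E} \<le> c"
  shows "measure_pmf.prob (Pi_pmf I dflt p) E \<le> c"
proof -
  define X where "X = Pi_pmf J dflt p"
  define Y where "Y = Pi_pmf (I - J) dflt p"
  define h :: "('a \<Rightarrow> 'b) \<times> ('a \<Rightarrow> 'b) \<Rightarrow> 'a \<Rightarrow> 'b" where "h = (\<lambda>(f, g) x. if x \<in> J then f x else g x)"
  have finJ: "finite J" using fin JI finite_subset by blast
  have "Pi_pmf I dflt p = Pi_pmf (J \<union> (I - J)) dflt p" using JI by (simp add: Un_absorb1 Un_Diff_cancel)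
  also have "\<dots> = map_pmf h (pair_pmf X Y)"
    unfolding h_def X_def Y_def by (rule Pi_pmf_union) (use fin finJ in auto)
  finally have eq: "Pi_pmf I dflt p = map_pmf h (pair_pmf X Y)" .
  have pp: "pair_pmf X Y = bind_pmf Y (\<lambda>g. map_pmf (\<lambda>f. (f, g)) X)"
    by (simp add: pair_pmf_def map_pmf_def bind_commute_pmf[of X Y])
  have sec: "measure_pmf.prob (map_pmf (\<lambda>f. (f, g)) X) (h -` E) \<le> c" if g: "g \<in> set_pmf Y" for g
  proof -
    have "measure_pmf.prob (map_pmf (\<lambda>f. (f, g)) X) (h -` E)
          = measure_pmf.prob X {f. (\<lambda>x. if x \<in> J then f x else g x) \<in> E}"
      by (simp add: measure_map_pmf h_def vimage_def)
    also have "\<dots> \<le> c" using bnd g unfolding X_def Y_def by blast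
    finally show ?thesis .
  qed
  obtain g0 where "g0 \<in> set_pmf Y" using set_pmf_not_empty by fast
  then have c0: "c \<ge> 0" using sec[of g0] by (meson measure_nonneg order_trans)
  have "ennreal (measure_pmf.prob (Pi_pmf I dflt p) E) = emeasure (measure_pmf (pair_pmf X Y)) (h -` E)"
    unfolding eq by (simp add: measure_pmf.emeasure_eq_measure measure_map_pmf)
  also have "\<dots> = (\<integral>\<^sup>+g. emeasure (measure_pmf (map_pmf (\<lambda>f. (f, g)) X)) (h -` E) \<partial>measure_pmf Y)"
    unfolding pp by (rule emeasure_bind_pmf)
  also have "\<dots> \<le> (\<integral>\<^sup>+g. ennreal c \<partial>measure_pmf Y)"
    by (intro nn_integral_mono_AE AE_pmfI)
       (simp add: measure_pmf.emeasure_eq_measure ennreal_leI sec[unfolded measure_map_pmf])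
  also have "\<dots> = ennreal c" by (simp add: measure_pmf.emeasure_space_1)
  finally show ?thesis using c0 by (simp add: ennreal_le_iff)
qed



definition rad :: "real pmf" where "rad = pmf_of_set {-1, 1}"

lemma set_rad: "set_pmf rad = {-1, 1}" by (simp add: rad_def)

lemma rad_set:
  assumes "finite J" "\<omega> \<in> set_pmf (Pi_pmf J dflt (\<lambda>_. rad))" "k \<in> J"
  shows "\<omega> k \<in> {-1, 1}"
  using set_Pi_pmf_subset'[OF assms(1), of dflt "\<lambda>_. rad"] assms(2,3)
  by (auto simp: PiE_dflt_def set_rad)

lemma rad_indep:
  assumes "finite J"
  shows "prob_space.indep_vars (measure_pmf (Pi_pmf J dflt (\<lambda>_. rad))) (\<lambda>_. borel) (\<lambda>k \<omega>. \<omega> k) J"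
proof -
  have "prob_space.indep_vars (measure_pmf (Pi_pmf J dflt (\<lambda>_. rad))) (\<lambda>_. borel) (\<lambda>k \<omega>. (\<lambda>v. v) (\<omega> k)) J"
    by (rule prob_space.indep_vars_compose2[OF measure_pmf.prob_space_axioms indep_vars_Pi_pmf[OF assms]])
       (simp add: measurable_count_space_eq1)
  then show ?thesis by simp
qed

lemma rad_exp:
  assumes "finite J" "k \<in> J"
  shows "measure_pmf.expectation (Pi_pmf J dflt (\<lambda>_. rad)) (\<lambda>\<omega>. \<omega> k) = 0"
proof -
  have "measure_pmf.expectation (Pi_pmf J dflt (\<lambda>_. rad)) (\<lambda>\<omega>. \<omega> k)
     = measure_pmf.expectation (map_pmf (\<lambda>\<omega>. \<omega> k) (Pi_pmf J dflt (\<lambda>_. rad))) (\<lambda>v. v)"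
    by simp
  also have "map_pmf (\<lambda>\<omega>. \<omega> k) (Pi_pmf J dflt (\<lambda>_. rad)) = rad"
    using Pi_pmf_component[OF assms(1), of k dflt "\<lambda>_. rad"] assms by simp
  also have "measure_pmf.expectation rad (\<lambda>v. v) = 0"
    unfolding rad_def by (subst integral_pmf_of_set) auto
  finally show ?thesis .
qed

lemma rad_hoeff:
  assumes fin: "finite J" and tt: "tt > 0" and Wb: "(\<Sum>k\<in>J. (w k)^2) \<le> Wb"
  shows "measure_pmf.prob (Pi_pmf J dflt (\<lambda>_. rad)) {\<omega>. \<bar>(\<Sum>k\<in>J. w k * \<omega> k)\<bar> \<ge> tt}
          \<le> 2 * exp (- (tt^2) / (2 * Wb))"
proof (cases "(\<Sum>k\<in>J. (w k)^2) = 0")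
  case True
  then have "\<forall>k\<in>J. w k = 0" using fin by (subst (asm) sum_nonneg_eq_0_iff) auto
  then have "{\<omega>. \<bar>(\<Sum>k\<in>J. w k * \<omega> k)\<bar> \<ge> tt} = {}" using tt by auto
  then show ?thesis by simp
next
  case False
  define M where "M = measure_pmf (Pi_pmf J dflt (\<lambda>_. rad))"
  interpret P: prob_space M unfolding M_def by (rule measure_pmf.prob_space_axioms)
  have S: "(\<Sum>k\<in>J. (w k)^2) > 0" using False by (simp add: order_less_le sum_nonneg)
  interpret H: Hoeffding_ineq M J "\<lambda>k \<omega>. w k * \<omega> k" "\<lambda>k. - \<bar>w k\<bar>" "\<lambda>k. \<bar>w k\<bar>"
     "\<Sum>k\<in>J. P.expectation (\<lambda>\<omega>. w k * \<omega> k)"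
  proof unfold_locales
    show "finite J" by fact
    show "P.indep_vars (\<lambda>_. borel) (\<lambda>k \<omega>. w k * \<omega> k) J"
      unfolding M_def
      by (rule prob_space.indep_vars_compose2[OF measure_pmf.prob_space_axioms rad_indep[OF fin], where Y="\<lambda>k v. w k * v"]) simp
    fix k assume k: "k \<in> J"
    show "AE \<omega> in M. w k * \<omega> k \<in> {- \<bar>w k\<bar>..\<bar>w k\<bar>}"
      unfolding M_def
    proof (rule AE_pmfI)
      fix \<omega> assume "\<omega> \<in> set_pmf (Pi_pmf J dflt (\<lambda>_. rad))"
      then have "\<omega> k \<in> {-1, 1}" using rad_set[OF fin _ k] by blast
      then show "w k * \<omega> k \<in> {- \<bar>w k\<bar>..\<bar>w k\<bar>}" by auto
    qed
  qed
  have mu0: "(\<Sum>k\<in>J. P.expectation (\<lambda>\<omega>. w k * \<omega> k)) = 0"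
    using rad_exp[OF fin] unfolding M_def by (intro sum.neutral) simp
  have den: "(\<Sum>k\<in>J. (\<bar>w k\<bar> - - \<bar>w k\<bar>)^2) = 4 * (\<Sum>k\<in>J. (w k)^2)"
    by (simp add: sum_distrib_left power_mult_distrib)
  have pos: "(\<Sum>k\<in>J. (\<bar>w k\<bar> - - \<bar>w k\<bar>)^2) > 0" using S den by simp
  have "P.prob {\<omega>\<in>space M. \<bar>(\<Sum>k\<in>J. w k * \<omega> k) - (\<Sum>k\<in>J. P.expectation (\<lambda>\<omega>. w k * \<omega> k))\<bar> \<ge> tt}
        \<le> 2 * exp (-2 * tt^2 / (\<Sum>k\<in>J. (\<bar>w k\<bar> - - \<bar>w k\<bar>)^2))"
    using H.Hoeffding_ineq_abs_ge[OF _ pos] tt by simp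
  also have "-2 * tt^2 / (\<Sum>k\<in>J. (\<bar>w k\<bar> - - \<bar>w k\<bar>)^2) = - (tt^2) / (2 * (\<Sum>k\<in>J. (w k)^2))"
    unfolding den by simp
  also have "\<dots> \<le> - (tt^2) / (2 * Wb)"
    using S Wb tt by (intro divide_left_mono_neg frac_le) (auto intro: mult_pos_pos)
  moreover have "(\<Sum>k\<in>J. w k * measure_pmf.expectation (Pi_pmf J dflt (\<lambda>_. rad)) (\<lambda>\<omega>. \<omega> k)) = 0"
    using rad_exp[OF fin] by (intro sum.neutral) simp
  ultimately show ?thesis unfolding M_def by simp (smt (verit) exp_le_cancel_iff)
qed



lemma ip_sum_right': "ip d u (\<lambda>k. \<Sum>c\<in>C. w c k) = (\<Sum>c\<in>C. ip d u (w c))"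
  by (simp add: ip_def sum_distrib_left sum.swap[of _ C])

lemma ip_sum_left': "ip d (\<lambda>k. \<Sum>c\<in>C. w c k) u = (\<Sum>c\<in>C. ip d (w c) u)"
  using ip_sum_right'[where d=d and u=u and C=C and w=w] by (simp add: ip_sym)

lemma sign_ip_self:
  assumes "\<forall>k<d. y k \<in> {-1, 1}"
  shows "ip d y y = real d"
proof -
  have "ip d y y = (\<Sum>k<d. 1)" unfolding ip_def using assms by (intro sum.cong) auto
  then show ?thesis by simp
qed

lemma det_main:
  fixes A :: "nat \<Rightarrow> nat \<Rightarrow> real" and s :: "nat \<Rightarrow> nat \<Rightarrow> real"
  assumes on: "orthonormal d qs"
    and sp: "\<And>j. j < d div 2 \<Longrightarrow> inspan d qs (A j)"
    and d2: "d \<ge> 2"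
    and N1: "NN d \<delta> \<ge> 1"
    and lnd: "(ln (real d))^2 \<ge> 12"
    and sgn: "\<And>i k. i \<in> {1..NN d \<delta>} \<Longrightarrow> k < d \<Longrightarrow> s i k \<in> {-1, 1}"
    and diag: "\<And>i. i \<in> {1..NN d \<delta>} \<Longrightarrow> ip d (s i) (Pv d qs (s i)) \<ge> real d / 4"
    and off: "\<And>i j. i \<in> {1..NN d \<delta>} \<Longrightarrow> j \<in> {1..NN d \<delta>} \<Longrightarrow> i \<noteq> j \<Longrightarrow>
               \<bar>ip d (s i) (Pv d qs (s j))\<bar> \<le> real d / (8 * real (NN d \<delta>))"
  shows "\<exists>x\<in>unit_ball d. FAV d \<delta> A s x
             \<le> - (1 / (sqrt (real d) * LL d)) * (1 / (sqrt (real (NN d \<delta>)) * (ln (real d))^2))"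
proof -
  define N where "N = NN d \<delta>"
  define I where "I = {1..N}"
  define G where "G = (\<lambda>i j. ip d (s i) (Pv d qs (s j)))"
  have Npos: "real N \<ge> 1" using N1 by (simp add: N_def)
  have cardI: "card I = N" by (simp add: I_def)
  have dpos: "real d > 0" using d2 by simp
  have Gdiag_le: "G j j \<le> real d" if "j \<in> I" for j
  proof -
    have "G j j = ip d (s j) (s j) - (\<Sum>c<length qs. (ip d (qs!c) (s j))^2)"
      unfolding G_def by (rule Pv_self[OF on])
    also have "ip d (s j) (s j) = real d" using sgn that by (intro sign_ip_self) (auto simp: I_def N_def)
    finally show ?thesis by (simp add: sum_nonneg)
  qed
  have rowsum: "(\<Sum>l\<in>I. G i l) \<ge> real d / 8" if i: "i \<in> I" for i
  proof -
    have e1: "(\<Sum>l\<in>I. G i l) = G i i + (\<Sum>l\<in>I-{i}. G i l)"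
      using i by (simp add: I_def sum.remove)
    have e2: "(\<Sum>l\<in>I-{i}. G i l) \<ge> (\<Sum>l\<in>I-{i}. - (real d / (8 * real N)))"
    proof (intro sum_mono)
      fix l assume l: "l \<in> I - {i}"
      then have "\<bar>G i l\<bar> \<le> real d / (8 * real N)" using off[of i l] i by (auto simp: G_def I_def N_def)
      then show "- (real d / (8 * real N)) \<le> G i l" by (simp add: abs_le_iff)
    qed
    have e3: "(\<Sum>l\<in>I-{i}. - (real d / (8 * real N))) = - ((real N - 1) * (real d / (8 * real N)))"
      using i cardI Npos by (simp add: I_def of_nat_diff)
    have e4: "G i i \<ge> real d / 4" using diag[of i] i by (simp add: G_def I_def N_def)
    have "(\<Sum>l\<in>I. G i l) \<ge> real d / 4 - (real N - 1) * (real d / (8 * real N))"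
      using e1 e2 e3 e4 by linarith
    moreover have "(real N - 1) * (real d / (8 * real N)) \<le> real d / 8"
      using Npos dpos by (simp add: field_simps)
    ultimately show ?thesis by linarith
  qed
  have total_le: "(\<Sum>j\<in>I. \<Sum>l\<in>I. G j l) \<le> 2 * real N * real d"
  proof -
    have "(\<Sum>l\<in>I. G j l) \<le> 2 * real d" if j: "j \<in> I" for j
    proof -
      have e1: "(\<Sum>l\<in>I. G j l) = G j j + (\<Sum>l\<in>I-{j}. G j l)"
        using j by (simp add: I_def sum.remove)
      have e2: "(\<Sum>l\<in>I-{j}. G j l) \<le> (\<Sum>l\<in>I-{j}. real d / (8 * real N))"
      proof (intro sum_mono)
        fix l assume l: "l \<in> I - {j}"
        then have "\<bar>G j l\<bar> \<le> real d / (8 * real N)" using off[of j l] j by (auto simp: G_def I_def N_def)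
        then show "G j l \<le> real d / (8 * real N)" by (simp add: abs_le_iff)
      qed
      have e3: "(\<Sum>l\<in>I-{j}. real d / (8 * real N)) = (real N - 1) * (real d / (8 * real N))"
        using j cardI Npos by (simp add: I_def of_nat_diff)
      have e4: "(real N - 1) * (real d / (8 * real N)) \<le> real d" using Npos dpos by (simp add: field_simps)
      show ?thesis using e1 e2 e3 e4 Gdiag_le[OF j] by linarith
    qed
    then have "(\<Sum>j\<in>I. \<Sum>l\<in>I. G j l) \<le> (\<Sum>j\<in>I. 2 * real d)" by (intro sum_mono) auto
    also have "\<dots> = 2 * real N * real d" using cardI by simp
    finally show ?thesis .
  qed
  define U where "U = (\<lambda>k. \<Sum>j\<in>I. Pv d qs (s j) k)"
  define nU where "nU = ip d U U"
  have ipsU: "ip d (s i) U = (\<Sum>l\<in>I. G i l)" for i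
    unfolding U_def G_def by (rule ip_sum_right')
  have nU_eq: "nU = (\<Sum>j\<in>I. \<Sum>l\<in>I. G j l)"
  proof -
    have "nU = (\<Sum>j\<in>I. ip d (Pv d qs (s j)) U)" unfolding nU_def U_def by (rule ip_sum_left')
    also have "\<dots> = (\<Sum>j\<in>I. \<Sum>l\<in>I. ip d (Pv d qs (s j)) (Pv d qs (s l)))"
      unfolding U_def by (simp add: ip_sum_right')
    also have "\<dots> = (\<Sum>j\<in>I. \<Sum>l\<in>I. G j l)" unfolding G_def by (simp add: Pv_Pv[OF on])
    finally show ?thesis .
  qed
  have Ine: "1 \<in> I" using N1 by (simp add: I_def N_def)
  have nU_pos: "nU > 0"
  proof -
    have "(\<Sum>j\<in>I. \<Sum>l\<in>I. G j l) \<ge> (\<Sum>j\<in>I. real d / 8)" by (intro sum_mono rowsum)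
    moreover have "(\<Sum>j\<in>I. real d / 8) > 0" using Ine dpos cardI Npos by simp
    ultimately show ?thesis using nU_eq by linarith
  qed
  define x where "x = (\<lambda>k. - U k / sqrt nU)"
  have x_ball: "x \<in> unit_ball d"
  proof -
    have "(\<Sum>k<d. (x k)^2) = (\<Sum>k<d. U k * U k) / nU"
      unfolding x_def using nU_pos by (simp add: power_divide power2_eq_square sum_divide_distrib)
    also have "(\<Sum>k<d. U k * U k) = nU" by (simp add: nU_def ip_def)
    finally show ?thesis using nU_pos by (simp add: unit_ball_def)
  qed
  have x_eq: "x = (\<lambda>k. \<Sum>j\<in>I. (- 1 / sqrt nU) * Pv d qs (s j) k)"
    unfolding x_def U_def by (simp add: sum_distrib_left sum_divide_distrib sum_negf)
  have Ax0: "infnorm_Ax d A x = 0"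
  proof -
    have "\<bar>\<Sum>k<d. A j k * x k\<bar> = 0" if "j < d div 2" for j
    proof -
      have "(\<Sum>k<d. A j k * x k) = ip d (A j) x" by (simp add: ip_def)
      also have "\<dots> = 0" unfolding x_eq ip_sum_right by (simp add: inspan_Pv[OF sp[OF that]])
      finally show ?thesis by simp
    qed
    moreover have "0 < d div 2" using d2 by simp
    ultimately have "(\<lambda>j. \<bar>\<Sum>k<d. A j k * x k\<bar>) ` {..<d div 2} = {0}"
      by (auto simp: image_iff intro!: bexI[of _ 0])
    then show ?thesis by (simp add: infnorm_Ax_def)
  qed
  define eps where "eps = 1 / (sqrt (real N) * (ln (real d))^2)"
  have lnpos: "(ln (real d))^2 > 0" using lnd by linarith
  have eps_le1: "eps \<le> 1"
  proof -
    have "sqrt (real N) \<ge> 1" using Npos by simp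
    then have "sqrt (real N) * (ln (real d))^2 \<ge> 1 * 1" using lnd
      by (intro mult_mono) auto
    then show ?thesis by (simp add: eps_def)
  qed
  have vx: "(\<Sum>k<d. vvec d s i k * x k) \<le> - eps" if i: "i \<in> I" for i
  proof -
    have "(\<Sum>k<d. vvec d s i k * x k) = ip d (s i) x / sqrt (real d)"
      by (simp add: vvec_def ip_def sum_divide_distrib)
    also have "ip d (s i) x = - (\<Sum>l\<in>I. G i l) / sqrt nU"
      unfolding x_def by (simp add: ip_def sum_divide_distrib[symmetric] ipsU[symmetric] sum_negf)
    finally have e: "(\<Sum>k<d. vvec d s i k * x k) = - (\<Sum>l\<in>I. G i l) / (sqrt nU * sqrt (real d))" by simp
    have "sqrt nU * sqrt (real d) \<le> sqrt (2 * real N * real d) * sqrt (real d)"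
      using total_le nU_eq by (intro mult_right_mono real_sqrt_le_mono) auto
    also have "\<dots> = sqrt (2 * real N) * real d" using dpos
      by (simp add: real_sqrt_mult)
    finally have den: "sqrt nU * sqrt (real d) \<le> sqrt (2 * real N) * real d" .
    have denpos: "sqrt nU * sqrt (real d) > 0" using nU_pos dpos by simp
    have "(\<Sum>l\<in>I. G i l) / (sqrt nU * sqrt (real d)) \<ge> (real d / 8) / (sqrt (2 * real N) * real d)"
      using rowsum[OF i] den denpos dpos by (intro frac_le) auto
    also have "(real d / 8) / (sqrt (2 * real N) * real d) = 1 / (8 * sqrt 2 * sqrt (real N))"
      using dpos by (simp add: real_sqrt_mult field_simps)
    also have "1 / (8 * sqrt 2 * sqrt (real N)) \<ge> eps"
    proof -
      have "8 * sqrt 2 \<le> (12::real)"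
      proof -
        have "(8 * sqrt 2)^2 = (128::real)" by (simp add: power_mult_distrib)
        then have "(8 * sqrt 2)^2 \<le> (12::real)^2" by simp
        then show ?thesis by (rule power2_le_imp_le) simp
      qed
      then have "8 * sqrt 2 * sqrt (real N) \<le> (ln (real d))^2 * sqrt (real N)"
        using lnd by (intro mult_right_mono) auto
      then have "8 * sqrt 2 * sqrt (real N) \<le> sqrt (real N) * (ln (real d))^2"
        by (simp add: mult.commute)
      then show ?thesis unfolding eps_def using Npos
        by (intro frac_le) (auto)
    qed
    finally show ?thesis using e by simp
  qed
  have gam_nn: "gam d \<delta> \<ge> 0" by (simp add: gam_def)
  have maxle: "Max ((\<lambda>i. (\<Sum>k<d. vvec d s i k * x k) - real i * gam d \<delta>) ` {1..NN d \<delta>}) \<le> - eps"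
  proof (subst Max_le_iff)
    show "finite ((\<lambda>i. (\<Sum>k<d. vvec d s i k * x k) - real i * gam d \<delta>) ` {1..NN d \<delta>})" by simp
    show "(\<lambda>i. (\<Sum>k<d. vvec d s i k * x k) - real i * gam d \<delta>) ` {1..NN d \<delta>} \<noteq> {}"
      using N1 by simp
    show "\<forall>a\<in>(\<lambda>i. (\<Sum>k<d. vvec d s i k * x k) - real i * gam d \<delta>) ` {1..NN d \<delta>}. a \<le> - eps"
    proof safe
      fix i assume i: "i \<in> {1..NN d \<delta>}"
      have "(\<Sum>k<d. vvec d s i k * x k) \<le> - eps" using vx[of i] i by (simp add: I_def N_def)
      moreover have "real i * gam d \<delta> \<ge> 0" using gam_nn by simp
      ultimately show "(\<Sum>k<d. vvec d s i k * x k) - real i * gam d \<delta> \<le> - eps" by linarith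
    qed
  qed
  have "FAV d \<delta> A s x = 1 / (sqrt (real d) * LL d) *
      max (- 1) (Max ((\<lambda>i. (\<Sum>k<d. vvec d s i k * x k) - real i * gam d \<delta>) ` {1..NN d \<delta>}))"
    by (simp add: FAV_def Ax0)
  also have "\<dots> \<le> 1 / (sqrt (real d) * LL d) * (- eps)"
    using maxle eps_le1 dpos by (intro mult_left_mono) (auto simp: LL_def)
  finally show ?thesis using x_ball by (intro bexI[of _ x]) (auto simp: eps_def N_def)
qed



definition blk :: "nat \<Rightarrow> nat \<Rightarrow> nat \<Rightarrow> nat set" where
  "blk m d a = {k. k < d \<and> k div m = a}"

lemma blk_fin [simp]: "finite (blk m d a)" by (simp add: blk_def)

lemma blk_sub: "blk m d a \<subseteq> {..<d}" by (auto simp: blk_def)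

lemma blk_disj: "a \<noteq> b \<Longrightarrow> blk m d a \<inter> blk m d b = {}" by (auto simp: blk_def)

lemma blk_union:
  assumes "m \<ge> 1"
  shows "(\<Union>a<d div m + 1. blk m d a) = {..<d}"
proof -
  have "k div m < d div m + 1" if "k < d" for k
    using that div_le_mono[of k d m] by simp
  then show ?thesis by (auto simp: blk_def)
qed

lemma blk_sum:
  assumes "m \<ge> 1"
  shows "(\<Sum>k<d. f k) = (\<Sum>a<d div m + 1. \<Sum>k\<in>blk m d a. f k)"
proof -
  have "(\<Sum>k<d. f k) = sum f (\<Union>a<d div m + 1. blk m d a)" using blk_union[OF assms] by simp
  also have "\<dots> = (\<Sum>a<d div m + 1. \<Sum>k\<in>blk m d a. f k)"
    by (rule sum.UNION_disjoint) (auto simp: blk_disj)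
  finally show ?thesis .
qed

lemma blk_card:
  assumes "m \<ge> 1"
  shows "card (blk m d a) \<le> m"
proof -
  have "blk m d a \<subseteq> {a*m..<a*m+m}"
  proof
    fix k assume "k \<in> blk m d a"
    then have "k div m = a" by (simp add: blk_def)
    then have e: "a * m + k mod m = k" using div_mult_mod_eq[of k m] by (simp add: mult.commute)
    have "k mod m < m" using assms by simp
    then show "k \<in> {a*m..<a*m+m}" using e by auto
  qed
  then have "card (blk m d a) \<le> card {a*m..<a*m+m}" by (intro card_mono) auto
  then show ?thesis by simp
qed

lemma blk_card_sum:
  assumes "m \<ge> 1"
  shows "(\<Sum>a<d div m + 1. real (card (blk m d a))) = real d"
  using blk_sum[OF assms, of "\<lambda>_. (1::real)" d] by simp

lemma blk_card_sq:
  assumes "m \<ge> 1"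
  shows "(\<Sum>a<d div m + 1. (real (card (blk m d a)))^2) \<le> real m * real d"
proof -
  have "(\<Sum>a<d div m + 1. (real (card (blk m d a)))^2) \<le> (\<Sum>a<d div m + 1. real m * real (card (blk m d a)))"
    using blk_card[OF assms] by (intro sum_mono) (simp add: power2_eq_square mult_right_mono)
  also have "\<dots> = real m * real d" by (simp only: sum_distrib_left[symmetric] blk_card_sum[OF assms])
  finally show ?thesis .
qed

lemma fin_sp: "finite J \<Longrightarrow> finite (set_pmf (Pi_pmf J dflt (\<lambda>_. rad)))"
  by (rule finite_subset[OF set_Pi_pmf_subset']) (auto simp: set_rad)

lemma rad_pair:
  assumes fin: "finite J" and k: "k \<in> J" and l: "l \<in> J"
  shows "measure_pmf.expectation (Pi_pmf J dflt (\<lambda>_. rad)) (\<lambda>\<omega>. \<omega> k * \<omega> l) = (if k = l then 1 else 0)"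
proof (cases "k = l")
  case True
  have "measure_pmf.expectation (Pi_pmf J dflt (\<lambda>_. rad)) (\<lambda>\<omega>. \<omega> k * \<omega> l)
       = measure_pmf.expectation (Pi_pmf J dflt (\<lambda>_. rad)) (\<lambda>\<omega>. 1)"
  proof (rule integral_cong_AE)
    show "AE x in measure_pmf (Pi_pmf J dflt (\<lambda>_. rad)). x k * x l = 1"
    proof (rule AE_pmfI)
      fix x assume "x \<in> set_pmf (Pi_pmf J dflt (\<lambda>_. rad))"
      then have "x k \<in> {-1, 1}" using rad_set[OF fin _ k] by blast
      then show "x k * x l = 1" using True by auto
    qed
  qed simp_all
  then show ?thesis using True by simp
next
  case False
  note P = measure_pmf.prob_space_axioms[of "Pi_pmf J dflt (\<lambda>_. rad)"]
  have ind: "prob_space.indep_vars (measure_pmf (Pi_pmf J dflt (\<lambda>_. rad))) (\<lambda>_. borel) (\<lambda>k \<omega>. \<omega> k) {k, l}"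
    by (rule prob_space.indep_vars_subset[OF P rad_indep[OF fin]]) (use k l in auto)
  have "measure_pmf.expectation (Pi_pmf J dflt (\<lambda>_. rad)) (\<lambda>\<omega>. \<Prod>x\<in>{k,l}. \<omega> x) = (\<Prod>x\<in>{k,l}. measure_pmf.expectation (Pi_pmf J dflt (\<lambda>_. rad)) (\<lambda>\<omega>. \<omega> x))"
    by (rule prob_space.indep_vars_lebesgue_integral[OF P _ ind]) (auto intro: integrable_measure_pmf_finite fin_sp[OF fin])
  also have "\<dots> = 0" using rad_exp[OF fin k] False by simp
  finally show ?thesis using False by simp
qed

lemma rad_quad:
  assumes fin: "finite J" and B: "B \<subseteq> J"
  shows "measure_pmf.expectation (Pi_pmf J dflt (\<lambda>_. rad)) (\<lambda>\<omega>. (\<Sum>k\<in>B. \<alpha> k * \<omega> k)^2)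
         = (\<Sum>k\<in>B. (\<alpha> k)^2)"
proof -
  have finB: "finite B" using fin B finite_subset by blast
  have sq: "(\<Sum>k\<in>B. \<alpha> k * \<omega> k)^2 = (\<Sum>k\<in>B. \<Sum>l\<in>B. \<alpha> k * \<alpha> l * (\<omega> k * \<omega> l))" for \<omega> :: "_ \<Rightarrow> real"
    by (simp add: power2_eq_square sum_product algebra_simps)
  have int: "integrable (measure_pmf (Pi_pmf J dflt (\<lambda>_. rad))) f" for f :: "_ \<Rightarrow> real"
    by (rule integrable_measure_pmf_finite[OF fin_sp[OF fin]])
  have "measure_pmf.expectation (Pi_pmf J dflt (\<lambda>_. rad)) (\<lambda>\<omega>. (\<Sum>k\<in>B. \<alpha> k * \<omega> k)^2)
      = (\<Sum>k\<in>B. \<Sum>l\<in>B. \<alpha> k * \<alpha> l * measure_pmf.expectation (Pi_pmf J dflt (\<lambda>_. rad)) (\<lambda>\<omega>. \<omega> k * \<omega> l))"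
    unfolding sq by (simp add: Bochner_Integration.integral_sum int)
  also have "\<dots> = (\<Sum>k\<in>B. \<Sum>l\<in>B. if l = k then \<alpha> k * \<alpha> l else 0)"
    apply (intro sum.cong refl)
    subgoal for k l using B rad_pair[OF fin, of k l dflt] by (auto simp: subset_iff)
    done
  also have "\<dots> = (\<Sum>k\<in>B. (\<alpha> k)^2)"
    using finB by (simp add: power2_eq_square)
  finally show ?thesis .
qed



definition sv :: "nat \<Rightarrow> (nat \<Rightarrow> real) pmf" where
  "sv d = Pi_pmf {..<d} undefined (\<lambda>_. rad)"

definition bip :: "nat \<Rightarrow> nat \<Rightarrow> (nat \<Rightarrow> real) list \<Rightarrow> nat \<Rightarrow> nat \<Rightarrow> (nat \<Rightarrow> real) \<Rightarrow> real" where
  "bip m d qs a c s = (\<Sum>k\<in>blk m d a. (qs!c) k * s k)"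

definition Xb where "Xb m d qs a s = (\<Sum>c<length qs. (bip m d qs a c s)^2)"

lemma bip_as_ip: "bip m d qs a c s = ip d (qs!c) (\<lambda>k. if k \<in> blk m d a then s k else 0)"
proof -
  have "ip d (qs!c) (\<lambda>k. if k \<in> blk m d a then s k else 0) = (\<Sum>k<d. if k \<in> blk m d a then (qs!c) k * s k else 0)"
    unfolding ip_def by (intro sum.cong) auto
  also have "\<dots> = (\<Sum>k\<in>{..<d} \<inter> blk m d a. (qs!c) k * s k)"
    by (simp add: sum.inter_restrict)
  also have "{..<d} \<inter> blk m d a = blk m d a" using blk_sub by blast
  finally show ?thesis by (simp add: bip_def)
qed

lemma bip_bessel:
  assumes on: "orthonormal d qs" and sg: "\<And>k. k \<in> blk m d a \<Longrightarrow> s k \<in> {-1, 1}"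
  shows "(\<Sum>c<length qs. (bip m d qs a c s)^2) \<le> real (card (blk m d a))"
proof -
  define z where "z = (\<lambda>k. if k \<in> blk m d a then s k else 0)"
  have "(\<Sum>c<length qs. (bip m d qs a c s)^2) = (\<Sum>c<length qs. (ip d (qs!c) z)^2)"
    by (simp add: bip_as_ip z_def)
  also have "\<dots> \<le> ip d z z" by (rule bessel[OF on])
  also have "ip d z z = (\<Sum>k<d. if k \<in> blk m d a then 1 else 0)"
    unfolding ip_def z_def
  proof (intro sum.cong refl)
    fix k assume "k \<in> {..<d}"
    show "(if k \<in> blk m d a then s k else 0) * (if k \<in> blk m d a then s k else 0)
          = (if k \<in> blk m d a then 1 else 0)"
    proof (cases "k \<in> blk m d a")
      case True
      then have "s k = -1 \<or> s k = 1" using sg by auto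
      then show ?thesis using True by auto
    qed simp
  qed
  also have "\<dots> = real (card ({..<d} \<inter> blk m d a))"
    by (simp add: sum.inter_restrict[symmetric])
  also have "{..<d} \<inter> blk m d a = blk m d a" using blk_sub by blast
  finally show ?thesis .
qed

lemma Xb_indep:
  "prob_space.indep_vars (measure_pmf (sv d)) (\<lambda>_. borel) (\<lambda>a s. Xb m d qs a s) L"
proof -
  note P = measure_pmf.prob_space_axioms[of "sv d"]
  have R: "prob_space.indep_vars (measure_pmf (sv d)) (\<lambda>a. PiM (blk m d a) (\<lambda>_. borel))
        (\<lambda>a \<omega>. restrict (\<lambda>k. \<omega> k) (blk m d a)) L"
    unfolding sv_def
    by (rule prob_space.indep_vars_restrict[OF measure_pmf.prob_space_axioms rad_indep])
       (auto simp: blk_sub disjoint_family_on_def blk_disj)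
  have meas: "(\<lambda>y. \<Sum>c<length qs. (\<Sum>k\<in>blk m d a. (qs!c) k * y k)^2) \<in> borel_measurable (PiM (blk m d a) (\<lambda>_. borel))" for a
    by measurable
  have "prob_space.indep_vars (measure_pmf (sv d)) (\<lambda>_. borel)
     (\<lambda>a \<omega>. (\<lambda>y. \<Sum>c<length qs. (\<Sum>k\<in>blk m d a. (qs!c) k * y k)^2) (restrict (\<lambda>k. \<omega> k) (blk m d a))) L"
    by (rule prob_space.indep_vars_compose2[OF P R meas])
  moreover have "(\<lambda>a \<omega>. (\<lambda>y. \<Sum>c<length qs. (\<Sum>k\<in>blk m d a. (qs!c) k * y k)^2) (restrict (\<lambda>k. \<omega> k) (blk m d a)))
        = (\<lambda>a s. Xb m d qs a s)"
    by (intro ext) (simp add: Xb_def bip_def)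
  ultimately show ?thesis by simp
qed

lemma sv_sign: "s \<in> set_pmf (sv d) \<Longrightarrow> k < d \<Longrightarrow> s k \<in> {-1, 1}"
  unfolding sv_def by (rule rad_set) auto

lemma Xb_exp:
  "measure_pmf.expectation (sv d) (Xb m d qs a) = (\<Sum>c<length qs. \<Sum>k\<in>blk m d a. ((qs!c) k)^2)"
proof -
  have int: "integrable (measure_pmf (sv d)) f" for f :: "_ \<Rightarrow> real"
    unfolding sv_def by (rule integrable_measure_pmf_finite[OF fin_sp]) simp
  have "measure_pmf.expectation (sv d) (Xb m d qs a)
      = (\<Sum>c<length qs. measure_pmf.expectation (sv d) (\<lambda>s. (\<Sum>k\<in>blk m d a. (qs!c) k * s k)^2))"
    unfolding Xb_def bip_def by (simp add: Bochner_Integration.integral_sum int)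
  also have "\<dots> = (\<Sum>c<length qs. \<Sum>k\<in>blk m d a. ((qs!c) k)^2)"
    unfolding sv_def by (intro sum.cong refl rad_quad) (auto simp: blk_sub)
  finally show ?thesis .
qed

lemma Xb_hoeff:
  assumes on: "orthonormal d qs" and m: "m \<ge> 1" and d: "d \<ge> 1"
  shows "measure_pmf.prob (sv d) {s. (\<Sum>a<d div m + 1. Xb m d qs a s) \<ge> real (length qs) + real d / 8}
          \<le> exp (- (real d / (32 * real m)))"
proof -
  define M where "M = d div m + 1"
  define mu where "mu = (\<Sum>a<M. measure_pmf.expectation (sv d) (Xb m d qs a))"
  interpret H: Hoeffding_ineq "measure_pmf (sv d)" "{..<M}" "\<lambda>a s. Xb m d qs a s" "\<lambda>_. 0"
     "\<lambda>a. real (card (blk m d a))" mu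
  proof unfold_locales
    show "finite {..<M}" by simp
    show "prob_space.indep_vars (measure_pmf (sv d)) (\<lambda>_. borel) (\<lambda>a s. Xb m d qs a s) {..<M}"
      by (rule Xb_indep)
    fix a assume "a \<in> {..<M}"
    show "AE s in measure_pmf (sv d). Xb m d qs a s \<in> {0..real (card (blk m d a))}"
    proof (rule AE_pmfI)
      fix s assume s: "s \<in> set_pmf (sv d)"
      have "Xb m d qs a s \<le> real (card (blk m d a))"
        unfolding Xb_def by (rule bip_bessel[OF on]) (use sv_sign[OF s] blk_sub in blast)
      moreover have "Xb m d qs a s \<ge> 0" unfolding Xb_def by (simp add: sum_nonneg)
      ultimately show "Xb m d qs a s \<in> {0..real (card (blk m d a))}" by simp
    qed
  qed (simp add: mu_def)
  have mu_eq: "mu = real (length qs)"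
  proof -
    have "mu = (\<Sum>a<M. \<Sum>c<length qs. \<Sum>k\<in>blk m d a. ((qs!c) k)^2)" by (simp add: mu_def Xb_exp)
    also have "\<dots> = (\<Sum>c<length qs. \<Sum>a<M. \<Sum>k\<in>blk m d a. ((qs!c) k)^2)" by (rule sum.swap)
    also have "\<dots> = (\<Sum>c<length qs. \<Sum>k<d. ((qs!c) k)^2)"
      unfolding M_def by (intro sum.cong refl blk_sum[OF m, symmetric])
    also have "\<dots> = (\<Sum>c<length qs. 1)"
      using on by (intro sum.cong refl) (auto simp: orthonormal_def ip_def power2_eq_square)
    finally show ?thesis by simp
  qed
  have S: "(\<Sum>a<M. (real (card (blk m d a)) - 0)^2) \<le> real m * real d"
    using blk_card_sq[OF m] by (simp add: M_def)
  have Spos: "(\<Sum>a<M. (real (card (blk m d a)) - 0)^2) > 0"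
  proof -
    have "(\<Sum>a<M. real (card (blk m d a))) = real d" using blk_card_sum[OF m] by (simp add: M_def)
    moreover have "(\<Sum>a<M. real (card (blk m d a))) \<le> (\<Sum>a<M. (real (card (blk m d a)) - 0)^2)"
    proof (intro sum_mono)
      fix a
      show "real (card (blk m d a)) \<le> (real (card (blk m d a)) - 0)^2"
        by (cases "card (blk m d a)") (auto simp: power2_eq_square)
    qed
    ultimately show ?thesis using d by linarith
  qed
  have "measure_pmf.prob (sv d) {s \<in> space (measure_pmf (sv d)). (\<Sum>a<M. Xb m d qs a s) \<ge> mu + real d / 8}
        \<le> exp (- 2 * (real d / 8)^2 / (\<Sum>a<M. (real (card (blk m d a)) - 0)^2))"
    by (rule H.Hoeffding_ineq_ge[OF _ Spos]) simp
  also have "- 2 * (real d / 8)^2 / (\<Sum>a<M. (real (card (blk m d a)) - 0)^2)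
             \<le> - 2 * (real d / 8)^2 / (real m * real d)"
    using S Spos d by (intro divide_left_mono_neg) auto
  also have "- 2 * (real d / 8)^2 / (real m * real d) = - (real d / (32 * real m))"
    using d m by (simp add: power2_eq_square field_simps)
  finally show ?thesis by (simp add: mu_eq M_def)
qed

definition Yc where "Yc m d qs a b s = (\<Sum>c<length qs. bip m d qs a c s * bip m d qs b c s)"

lemma Yc_bound:
  assumes on: "orthonormal d qs" and m: "m \<ge> 1" and ab: "a \<noteq> b" and t: "t > 0"
  shows "measure_pmf.prob (sv d) {s. \<bar>Yc m d qs a b s\<bar> \<ge> t} \<le> 2 * exp (- (t^2) / (2 * real m))"
  unfolding sv_def
proof (rule prob_Pi_cond)
  show "finite {..<d}" by simp
  show "blk m d a \<subseteq> {..<d}" by (rule blk_sub)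
  fix g assume g: "g \<in> set_pmf (Pi_pmf ({..<d} - blk m d a) undefined (\<lambda>_. rad))"
  have gs: "g k \<in> {-1, 1}" if "k \<in> blk m d b" for k
    using rad_set[OF _ g] that blk_sub[of m d b] blk_disj[OF ab, of m d] by blast
  define wg where "wg = (\<lambda>k. \<Sum>c<length qs. (qs!c) k * bip m d qs b c g)"
  have sec: "Yc m d qs a b (\<lambda>x. if x \<in> blk m d a then f x else g x) = (\<Sum>k\<in>blk m d a. wg k * f k)" for f
  proof -
    have b1: "bip m d qs b c (\<lambda>x. if x \<in> blk m d a then f x else g x) = bip m d qs b c g" for c
      unfolding bip_def using blk_disj[OF ab, of m d] by (intro sum.cong) auto
    have b2: "bip m d qs a c (\<lambda>x. if x \<in> blk m d a then f x else g x) = (\<Sum>k\<in>blk m d a. (qs!c) k * f k)" for c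
      unfolding bip_def by (intro sum.cong) auto
    show ?thesis unfolding Yc_def b1 b2 wg_def
      by (simp add: sum_distrib_left sum_distrib_right sum.swap[of _ "blk m d a"] algebra_simps)
  qed
  have W: "(\<Sum>k\<in>blk m d a. (wg k)^2) \<le> real m"
  proof -
    have "(\<Sum>k\<in>blk m d a. (wg k)^2) \<le> (\<Sum>k<d. (wg k)^2)"
      by (intro sum_mono2) (auto simp: blk_sub)
    also have "\<dots> = ip d wg wg" by (simp add: ip_def power2_eq_square)
    also have "wg = (\<lambda>k. \<Sum>c<length qs. bip m d qs b c g * (qs!c) k)"
      by (simp add: wg_def mult.commute)
    also have "ip d \<dots> \<dots> = (\<Sum>c<length qs. (bip m d qs b c g)^2)"
      by (rule ortho_comb_norm[OF on])
    also have "\<dots> \<le> real (card (blk m d b))" by (rule bip_bessel[OF on gs])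
    also have "\<dots> \<le> real m" using blk_card[OF m] by simp
    finally show ?thesis by (simp add: wg_def mult.commute)
  qed
  have "{f. (\<lambda>x. if x \<in> blk m d a then f x else g x) \<in> {s. \<bar>Yc m d qs a b s\<bar> \<ge> t}}
        = {f. \<bar>(\<Sum>k\<in>blk m d a. wg k * f k)\<bar> \<ge> t}"
    by (simp add: sec)
  also have "measure_pmf.prob (Pi_pmf (blk m d a) undefined (\<lambda>_. rad)) \<dots> \<le> 2 * exp (- (t^2) / (2 * real m))"
    by (rule rad_hoeff[OF _ t W]) simp
  finally show "measure_pmf.prob (Pi_pmf (blk m d a) undefined (\<lambda>_. rad))
     {f. (\<lambda>x. if x \<in> blk m d a then f x else g x) \<in> {s. \<bar>Yc m d qs a b s\<bar> \<ge> t}}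
     \<le> 2 * exp (- (t^2) / (2 * real m))" .
qed

lemma quad_decomp:
  assumes m: "m \<ge> 1"
  shows "(\<Sum>c<length qs. (ip d (qs!c) s)^2)
       = (\<Sum>a<d div m + 1. Xb m d qs a s) + (\<Sum>a<d div m + 1. \<Sum>b\<in>{..<d div m + 1} - {a}. Yc m d qs a b s)"
proof -
  define M where "M = d div m + 1"
  have ipb: "ip d (qs!c) s = (\<Sum>a<M. bip m d qs a c s)" for c
    unfolding ip_def bip_def M_def by (rule blk_sum[OF m])
  have sq: "(\<Sum>a<M. \<beta> a)^2 = (\<Sum>a<M. (\<beta> a)^2) + (\<Sum>a<M. \<Sum>b\<in>{..<M} - {a}. \<beta> a * \<beta> b)" for \<beta> :: "nat \<Rightarrow> real"
  proof -
    have "(\<Sum>a<M. \<beta> a)^2 = (\<Sum>a<M. \<Sum>b<M. \<beta> a * \<beta> b)"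
      by (simp add: power2_eq_square sum_product)
    also have "\<dots> = (\<Sum>a<M. (\<beta> a)^2 + (\<Sum>b\<in>{..<M} - {a}. \<beta> a * \<beta> b))"
      by (intro sum.cong refl) (simp add: sum.remove power2_eq_square)
    finally show ?thesis by (simp add: sum.distrib)
  qed
  have "(\<Sum>c<length qs. (ip d (qs!c) s)^2)
      = (\<Sum>c<length qs. (\<Sum>a<M. (bip m d qs a c s)^2) + (\<Sum>a<M. \<Sum>b\<in>{..<M} - {a}. bip m d qs a c s * bip m d qs b c s))"
    unfolding ipb sq by simp
  also have "\<dots> = (\<Sum>c<length qs. \<Sum>a<M. (bip m d qs a c s)^2)
       + (\<Sum>c<length qs. \<Sum>a<M. \<Sum>b\<in>{..<M} - {a}. bip m d qs a c s * bip m d qs b c s)"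
    by (rule sum.distrib)
  also have "(\<Sum>c<length qs. \<Sum>a<M. (bip m d qs a c s)^2) = (\<Sum>a<M. Xb m d qs a s)"
    unfolding Xb_def by (rule sum.swap)
  also have "(\<Sum>c<length qs. \<Sum>a<M. \<Sum>b\<in>{..<M} - {a}. bip m d qs a c s * bip m d qs b c s)
      = (\<Sum>a<M. \<Sum>c<length qs. \<Sum>b\<in>{..<M} - {a}. bip m d qs a c s * bip m d qs b c s)"
    by (rule sum.swap)
  also have "\<dots> = (\<Sum>a<M. \<Sum>b\<in>{..<M} - {a}. Yc m d qs a b s)"
    unfolding Yc_def by (intro sum.cong refl sum.swap)
  finally show ?thesis by (simp add: M_def)
qed

lemma diag_tail:
  assumes on: "orthonormal d qs" and r: "length qs \<le> d div 2" and m: "m \<ge> 1" and d: "d \<ge> 1"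
  defines "M \<equiv> d div m + 1"
  defines "t \<equiv> real d / (8 * real M^2)"
  shows "measure_pmf.prob (sv d) {s. ip d s (Pv d qs s) < real d / 4}
         \<le> exp (- (real d / (32 * real m))) + real M^2 * (2 * exp (- (t^2) / (2 * real m)))"
proof -
  define F1 where "F1 = {s. (\<Sum>a<M. Xb m d qs a s) \<ge> real (length qs) + real d / 8}"
  define F2 where "F2 = (\<lambda>a b. {s. \<bar>Yc m d qs a b s\<bar> \<ge> t})"
  have Mpos: "real M \<ge> 1" by (simp add: M_def)
  have tpos: "t > 0" using d Mpos by (simp add: t_def)
  have incl: "{s. ip d s (Pv d qs s) < real d / 4} \<inter> set_pmf (sv d) \<subseteq> F1 \<union> (\<Union>a<M. \<Union>b\<in>{..<M} - {a}. F2 a b)"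
  proof (rule ccontr)
    assume "\<not> ?thesis"
    then obtain s where s: "s \<in> set_pmf (sv d)" and ev: "ip d s (Pv d qs s) < real d / 4"
      and n1: "s \<notin> F1" and n2: "\<And>a b. a < M \<Longrightarrow> b \<in> {..<M} - {a} \<Longrightarrow> s \<notin> F2 a b" by blast
    have "ip d s (Pv d qs s) = real d - (\<Sum>c<length qs. (ip d (qs!c) s)^2)"
      using Pv_self[OF on] sign_ip_self[of d s] sv_sign[OF s] by simp
    also have "(\<Sum>c<length qs. (ip d (qs!c) s)^2)
       = (\<Sum>a<M. Xb m d qs a s) + (\<Sum>a<M. \<Sum>b\<in>{..<M} - {a}. Yc m d qs a b s)"
      unfolding M_def by (rule quad_decomp[OF m])
    finally have e: "ip d s (Pv d qs s) = real d - ((\<Sum>a<M. Xb m d qs a s) + (\<Sum>a<M. \<Sum>b\<in>{..<M} - {a}. Yc m d qs a b s))" .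
    have x1: "(\<Sum>a<M. Xb m d qs a s) < real d / 2 + real d / 8"
      using n1 r unfolding F1_def by (simp add: not_le)
    have "(\<Sum>a<M. \<Sum>b\<in>{..<M} - {a}. Yc m d qs a b s) \<le> (\<Sum>a<M. \<Sum>b\<in>{..<M} - {a}. t)"
      using n2 unfolding F2_def by (intro sum_mono) (force simp: not_le)
    also have "\<dots> \<le> (\<Sum>a<M. real M * t)"
      using tpos by (intro sum_mono) (simp add: card_Diff_subset mult_right_mono)
    also have "\<dots> = real d / 8" using Mpos by (simp add: t_def power2_eq_square field_simps)
    finally have "(\<Sum>a<M. \<Sum>b\<in>{..<M} - {a}. Yc m d qs a b s) \<le> real d / 8" .
    with e x1 ev show False by linarith
  qed
  have "measure_pmf.prob (sv d) {s. ip d s (Pv d qs s) < real d / 4}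
        = measure_pmf.prob (sv d) ({s. ip d s (Pv d qs s) < real d / 4} \<inter> set_pmf (sv d))"
    by (simp add: measure_Int_set_pmf)
  also have "\<dots> \<le> measure_pmf.prob (sv d) (F1 \<union> (\<Union>a<M. \<Union>b\<in>{..<M} - {a}. F2 a b))"
    by (rule measure_pmf.finite_measure_mono[OF incl]) simp
  also have "\<dots> \<le> measure_pmf.prob (sv d) F1 + measure_pmf.prob (sv d) (\<Union>a<M. \<Union>b\<in>{..<M} - {a}. F2 a b)"
    by (rule measure_Un_le) auto
  also have "measure_pmf.prob (sv d) (\<Union>a<M. \<Union>b\<in>{..<M} - {a}. F2 a b)
        \<le> (\<Sum>a<M. measure_pmf.prob (sv d) (\<Union>b\<in>{..<M} - {a}. F2 a b))"
    by (rule measure_UNION_le) auto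
  also have "\<dots> \<le> (\<Sum>a<M. \<Sum>b\<in>{..<M} - {a}. measure_pmf.prob (sv d) (F2 a b))"
    by (intro sum_mono measure_UNION_le) auto
  also have "\<dots> \<le> (\<Sum>a<M. \<Sum>b\<in>{..<M} - {a}. 2 * exp (- (t^2) / (2 * real m)))"
    unfolding F2_def by (intro sum_mono Yc_bound[OF on m _ tpos]) auto
  also have "\<dots> \<le> (\<Sum>a<M. real M * (2 * exp (- (t^2) / (2 * real m))))"
    by (intro sum_mono) (simp add: card_Diff_subset mult_right_mono)
  also have "\<dots> = real M^2 * (2 * exp (- (t^2) / (2 * real m)))" by (simp add: power2_eq_square)
  also have "measure_pmf.prob (sv d) F1 \<le> exp (- (real d / (32 * real m)))"
    unfolding F1_def M_def by (rule Xb_hoeff[OF on m d])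
  finally show ?thesis by simp
qed



lemma PiE_dflt_undefined: "PiE_dflt A undefined B = PiE A B"
  by (auto simp: PiE_dflt_def PiE_def extensional_def Pi_def)

lemma sv_alt: "sv d = pmf_of_set (PiE {..<d} (\<lambda>_. {-1, 1::real}))"
  unfolding sv_def rad_def
  by (subst Pi_pmf_of_set) (auto simp: PiE_dflt_undefined)

lemma samples_alt:
  "pmf_of_set (sign_samples d N) = Pi_pmf {1..N} undefined (\<lambda>_. sv d)"
proof -
  have "Pi_pmf {1..N} undefined (\<lambda>_. sv d) = Pi_pmf {1..N} undefined (\<lambda>_. pmf_of_set (PiE {..<d} (\<lambda>_. {-1, 1::real})))"
    by (simp add: sv_alt)
  also have "\<dots> = pmf_of_set (PiE_dflt {1..N} undefined (\<lambda>_. PiE {..<d} (\<lambda>_. {-1, 1::real})))"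
    by (rule Pi_pmf_of_set) (auto simp: PiE_eq_empty_iff intro!: finite_PiE)
  finally show ?thesis by (simp add: PiE_dflt_undefined sign_samples_def)
qed

lemma off_bound:
  assumes on: "orthonormal d qs" and ij: "i \<in> I" "j \<in> I" "i \<noteq> j" and fin: "finite I"
    and tau: "tau > 0" and d: "d \<ge> 1"
  shows "measure_pmf.prob (Pi_pmf I undefined (\<lambda>_. sv d)) {f. \<bar>ip d (f i) (Pv d qs (f j))\<bar> \<ge> tau}
         \<le> 2 * exp (- (tau^2) / (2 * real d))"
proof (rule prob_Pi_cond[OF fin, of "{i}"])
  show "{i} \<subseteq> I" using ij by simp
  fix g assume g: "g \<in> set_pmf (Pi_pmf (I - {i}) undefined (\<lambda>_. sv d))"
  have gj: "g j \<in> set_pmf (sv d)"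
    using set_Pi_pmf_subset'[of "I - {i}" undefined "\<lambda>_. sv d"] g ij fin by (auto simp: PiE_dflt_def)
  define w where "w = Pv d qs (g j)"
  have W: "(\<Sum>k<d. (w k)^2) \<le> real d"
  proof -
    have "(\<Sum>k<d. (w k)^2) = ip d w w" by (simp add: ip_def power2_eq_square)
    also have "\<dots> = ip d (g j) (g j) - (\<Sum>c<length qs. (ip d (qs!c) (g j))^2)"
      unfolding w_def Pv_Pv[OF on] by (rule Pv_self[OF on])
    also have "ip d (g j) (g j) = real d" using sv_sign[OF gj] by (intro sign_ip_self) auto
    finally show ?thesis by (simp add: sum_nonneg)
  qed
  have "measure_pmf.prob (Pi_pmf {i} undefined (\<lambda>_. sv d))
      {f. (\<lambda>x. if x \<in> {i} then f x else g x) \<in> {f. \<bar>ip d (f i) (Pv d qs (f j))\<bar> \<ge> tau}}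
      = measure_pmf.prob (sv d) {a. \<bar>(\<Sum>k<d. w k * a k)\<bar> \<ge> tau}"
    using ij by (simp add: Pi_pmf_singleton measure_map_pmf vimage_def w_def ip_def mult.commute)
  also have "\<dots> \<le> 2 * exp (- (tau^2) / (2 * real d))"
    unfolding sv_def by (rule rad_hoeff[OF _ tau W]) simp
  finally show "measure_pmf.prob (Pi_pmf {i} undefined (\<lambda>_. sv d))
      {f. (\<lambda>x. if x \<in> {i} then f x else g x) \<in> {f. \<bar>ip d (f i) (Pv d qs (f j))\<bar> \<ge> tau}}
      \<le> 2 * exp (- (tau^2) / (2 * real d))" .
qed

lemma diag_comp:
  assumes "finite I" "i \<in> I"
  shows "measure_pmf.prob (Pi_pmf I undefined (\<lambda>_. sv d)) {f. P (f i)} = measure_pmf.prob (sv d) {s. P s}"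
proof -
  have "measure_pmf.prob (Pi_pmf I undefined (\<lambda>_. sv d)) {f. P (f i)}
      = measure_pmf.prob (map_pmf (\<lambda>f. f i) (Pi_pmf I undefined (\<lambda>_. sv d))) {s. P s}"
    by (simp add: measure_map_pmf vimage_def)
  also have "map_pmf (\<lambda>f. f i) (Pi_pmf I undefined (\<lambda>_. sv d)) = sv d"
    using Pi_pmf_component[OF assms(1), of i undefined "\<lambda>_. sv d"] assms by simp
  finally show ?thesis .
qed



lemma prob_main:
  fixes A :: "nat \<Rightarrow> nat \<Rightarrow> real"
  assumes d2: "d \<ge> 2" and N1: "NN d \<delta> \<ge> 1" and lnd: "(ln (real d))^2 \<ge> 12" and m: "m \<ge> 1"
  defines "N \<equiv> NN d \<delta>"
  defines "M \<equiv> d div m + 1"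
  defines "t \<equiv> real d / (8 * real M^2)"
  defines "tau \<equiv> real d / (8 * real N)"
  shows "measure_pmf.prob (pmf_of_set (sign_samples d N))
       {s. \<exists>x\<in>unit_ball d. FAV d \<delta> A s x
             \<le> - (1 / (sqrt (real d) * LL d)) * (1 / (sqrt (real N) * (ln (real d))^2))}
     \<ge> 1 - (real N * (exp (- (real d / (32 * real m))) + real M^2 * (2 * exp (- (t^2) / (2 * real m))))
            + real N * real N * (2 * exp (- (tau^2) / (2 * real d))))"
proof -
  obtain qs where len: "length qs \<le> length (map (\<lambda>j. A j) [0..<d div 2])" and on: "orthonormal d qs"
    and sp: "\<forall>u\<in>set (map (\<lambda>j. A j) [0..<d div 2]). inspan d qs u"
    using gram_schmidt by blast
  have r: "length qs \<le> d div 2" using len by simp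
  have spj: "inspan d qs (A j)" if "j < d div 2" for j using sp that by auto
  define I where "I = {1..N}"
  define mu where "mu = Pi_pmf I undefined (\<lambda>_. sv d)"
  have mu_eq: "pmf_of_set (sign_samples d N) = mu" by (simp add: samples_alt mu_def I_def)
  define E where "E = {s. \<exists>x\<in>unit_ball d. FAV d \<delta> A s x
             \<le> - (1 / (sqrt (real d) * LL d)) * (1 / (sqrt (real N) * (ln (real d))^2))}"
  define D where "D = (\<lambda>i::nat. {f. ip d (f i) (Pv d qs (f i)) < real d / 4})"
  define Oe where "Oe = (\<lambda>i j::nat. {f. \<bar>ip d (f i) (Pv d qs (f j))\<bar> \<ge> tau})"
  define Bad where "Bad = (\<Union>i\<in>I. D i) \<union> (\<Union>i\<in>I. \<Union>j\<in>I - {i}. Oe i j)"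
  have dpos: "d \<ge> 1" using d2 by simp
  have Npos: "real N \<ge> 1" using N1 by (simp add: N_def)
  have taupos: "tau > 0" using d2 Npos by (simp add: tau_def)
  have incl: "- E \<inter> set_pmf mu \<subseteq> Bad"
  proof
    fix f assume f: "f \<in> - E \<inter> set_pmf mu"
    have fi: "f i \<in> set_pmf (sv d)" if "i \<in> I" for i
      using set_Pi_pmf_subset'[of I undefined "\<lambda>_. sv d"] f that by (auto simp: mu_def I_def PiE_dflt_def)
    show "f \<in> Bad"
    proof (rule ccontr)
      assume nb: "f \<notin> Bad"
      have "f \<in> E" unfolding E_def N_def mem_Collect_eq
      proof (rule det_main[OF on spj d2 N1 lnd])
        show "f i k \<in> {-1, 1}" if "i \<in> {1..NN d \<delta>}" "k < d" for i k
          using sv_sign[OF fi] that by (auto simp: I_def N_def)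
        show "ip d (f i) (Pv d qs (f i)) \<ge> real d / 4" if "i \<in> {1..NN d \<delta>}" for i
          using nb that unfolding Bad_def D_def by (auto simp: I_def N_def not_less)
        show "\<bar>ip d (f i) (Pv d qs (f j))\<bar> \<le> real d / (8 * real (NN d \<delta>))"
          if "i \<in> {1..NN d \<delta>}" "j \<in> {1..NN d \<delta>}" "i \<noteq> j" for i j
        proof -
          have "f \<notin> Oe i j" using nb that unfolding Bad_def by (auto simp: I_def N_def)
          then show ?thesis unfolding Oe_def tau_def N_def by simp
        qed
      qed
      then show False using f by simp
    qed
  qed
  have "measure_pmf.prob mu Bad \<le> measure_pmf.prob mu (\<Union>i\<in>I. D i) + measure_pmf.prob mu (\<Union>i\<in>I. \<Union>j\<in>I - {i}. Oe i j)"
    unfolding Bad_def by (rule measure_Un_le) auto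
  also have "measure_pmf.prob mu (\<Union>i\<in>I. D i) \<le> (\<Sum>i\<in>I. measure_pmf.prob mu (D i))"
    by (rule measure_UNION_le) (auto simp: I_def)
  also have "\<dots> \<le> (\<Sum>i\<in>I. exp (- (real d / (32 * real m))) + real M^2 * (2 * exp (- (t^2) / (2 * real m))))"
  proof (intro sum_mono)
    fix i assume i: "i \<in> I"
    have "measure_pmf.prob mu (D i) = measure_pmf.prob (sv d) {s. ip d s (Pv d qs s) < real d / 4}"
      unfolding mu_def D_def by (rule diag_comp) (use i in \<open>auto simp: I_def\<close>)
    also have "\<dots> \<le> exp (- (real d / (32 * real m))) + real M^2 * (2 * exp (- (t^2) / (2 * real m)))"
      unfolding M_def t_def by (rule diag_tail[OF on r m dpos])
    finally show "measure_pmf.prob mu (D i) \<le> exp (- (real d / (32 * real m))) + real M^2 * (2 * exp (- (t^2) / (2 * real m)))" .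
  qed
  also have "measure_pmf.prob mu (\<Union>i\<in>I. \<Union>j\<in>I - {i}. Oe i j) \<le> (\<Sum>i\<in>I. measure_pmf.prob mu (\<Union>j\<in>I - {i}. Oe i j))"
    by (rule measure_UNION_le) (auto simp: I_def)
  also have "\<dots> \<le> (\<Sum>i\<in>I. \<Sum>j\<in>I - {i}. measure_pmf.prob mu (Oe i j))"
    by (intro sum_mono measure_UNION_le) (auto simp: I_def)
  also have "\<dots> \<le> (\<Sum>i\<in>I. \<Sum>j\<in>I - {i}. 2 * exp (- (tau^2) / (2 * real d)))"
    unfolding mu_def Oe_def
    by (intro sum_mono off_bound[OF on _ _ _ _ taupos dpos]) (auto simp: I_def)
  also have "\<dots> \<le> (\<Sum>i\<in>I. real N * (2 * exp (- (tau^2) / (2 * real d))))"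
    by (intro sum_mono) (auto simp: I_def card_Diff_subset mult_right_mono)
  finally have bad: "measure_pmf.prob mu Bad \<le> real N * (exp (- (real d / (32 * real m))) + real M^2 * (2 * exp (- (t^2) / (2 * real m))))
            + real N * real N * (2 * exp (- (tau^2) / (2 * real d)))"
    by (simp add: I_def)
  have "measure_pmf.prob mu (- E) = measure_pmf.prob mu (- E \<inter> set_pmf mu)"
    by (simp add: measure_Int_set_pmf)
  also have "\<dots> \<le> measure_pmf.prob mu Bad" by (rule measure_pmf.finite_measure_mono[OF incl]) simp
  finally have "measure_pmf.prob mu (- E) \<le> \<dots>" .
  moreover have "measure_pmf.prob mu E = 1 - measure_pmf.prob mu (- E)"
    using measure_pmf.prob_compl[of E mu] by (simp add: Compl_eq_Diff_UNIV)
  ultimately show ?thesis using bad unfolding mu_eq E_def by linarith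
qed



definition Bnd :: "real \<Rightarrow> real" where
  "Bnd x = x powr (1/6) * (exp (- (x powr (1/10) / 32)) + 9 * x powr (1/5) * (2 * exp (- (x powr (7/10) / 10368))))
         + x powr (1/3) * (2 * exp (- (x powr (2/3) / 128)))"

lemma powr_div_self:
  fixes x :: real
  assumes "x > 0"
  shows "x / x powr a = x powr (1 - a)"
proof -
  have "x powr (1 - a) = x powr 1 / x powr a" by (rule powr_diff)
  also have "x powr 1 = x" using assms by simp
  finally show ?thesis by simp
qed

lemma NN_le:
  assumes d: "(1::real) \<le> ln (real d)" and "0 < \<delta>" "\<delta> < 1"
  shows "real (NN d \<delta>) \<le> real d powr (1/6)"
proof -
  have dpos: "real d > 1"
  proof (rule ccontr)
    assume "\<not> real d > 1"
    then have "ln (real d) \<le> 0" by (cases "d = 0") auto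
    then show False using d by simp
  qed
  have l4: "(ln (real d))^4 \<ge> 1" using d by (simp add: one_le_power)
  have "real (NN d \<delta>) \<le> real d powr (\<delta>/6) / (ln (real d))^4"
    unfolding NN_def by (simp add: divide_nonneg_nonneg)
  also have "\<dots> \<le> real d powr (\<delta>/6) / 1" using l4 by (intro divide_left_mono) auto
  also have "\<dots> = real d powr (\<delta>/6)" by simp
  also have "\<dots> \<le> real d powr (1/6)" using assms dpos by (intro powr_mono) auto
  finally show ?thesis .
qed

lemma bound_real:
  fixes d :: nat
  assumes \<delta>: "0 < \<delta>" "\<delta> < 1" and p9: "real d powr (9/10) \<ge> 2" and lnx: "ln (real d) \<ge> 1"
    and N1: "NN d \<delta> \<ge> 1"
  defines "x \<equiv> real d"
  defines "m \<equiv> nat \<lfloor>x powr (9/10)\<rfloor>"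
  defines "N \<equiv> NN d \<delta>"
  defines "M \<equiv> d div m + 1"
  defines "t \<equiv> real d / (8 * real M^2)"
  defines "tau \<equiv> real d / (8 * real N)"
  shows "real N * (exp (- (real d / (32 * real m))) + real M^2 * (2 * exp (- (t^2) / (2 * real m))))
            + real N * real N * (2 * exp (- (tau^2) / (2 * real d))) \<le> Bnd x"
proof -
  have x1: "x > 1" unfolding x_def
  proof (rule ccontr)
    assume "\<not> real d > 1"
    then have "ln (real d) \<le> 0" by (cases "d = 0") auto
    then show False using lnx by simp
  qed
  define p where "p = x powr (9/10)"
  have p2: "p \<ge> 2" using p9 by (simp add: p_def x_def)
  have mle: "real m \<le> p" unfolding m_def p_def using p2 by (simp add: p_def)
  have mge: "real m \<ge> p / 2"
  proof -
    have "real m = of_int \<lfloor>p\<rfloor>" unfolding m_def p_def using p2 p_def by simp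
    moreover have "of_int \<lfloor>p\<rfloor> > p - 1" by linarith
    ultimately show ?thesis using p2 by linarith
  qed
  have mpos: "real m > 0" using mge p2 by linarith
  have xp: "x / p = x powr (1/10)"
  proof -
    have "x / p = x powr (1 - 9/10)" unfolding p_def by (rule powr_div_self) (use x1 in simp)
    then show ?thesis by simp
  qed
  have q1: "x powr (1/10) \<ge> 1" using x1 by (intro ge_one_powr_ge_zero) auto
  have T1: "exp (- (real d / (32 * real m))) \<le> exp (- (x powr (1/10) / 32))"
  proof -
    have "x / (32 * p) \<le> x / (32 * real m)" using mle mpos x1 by (intro divide_left_mono) auto
    moreover have "x / (32 * p) = x powr (1/10) / 32" using xp by simp
    ultimately show ?thesis by (simp add: x_def)
  qed
  have Mle: "real M \<le> 3 * x powr (1/10)"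
  proof -
    have "real (d div m) \<le> real d / real m" by (rule of_nat_div_le_of_nat)
    also have "\<dots> \<le> x / (p / 2)" unfolding x_def using mge p2 x1 by (intro divide_left_mono) (auto simp: x_def)
    also have "\<dots> = 2 * (x / p)" by simp
    also have "\<dots> = 2 * x powr (1/10)" using xp by simp
    finally show ?thesis using q1 by (simp add: M_def)
  qed
  have M1: "real M \<ge> 1" by (simp add: M_def)
  have M2: "real M^2 \<le> 9 * x powr (1/5)"
  proof -
    have "real M^2 \<le> (3 * x powr (1/10))^2" using Mle M1 by (intro power_mono) auto
    also have "\<dots> = 9 * x powr (1/5)" using x1 by (simp add: power_mult_distrib powr_powr[symmetric] powr_realpow[symmetric] power2_eq_square powr_add[symmetric])
    finally show ?thesis .
  qed
  have tge: "t \<ge> x powr (4/5) / 72"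
  proof -
    have "x powr (4/5) / 72 = x / (8 * (9 * x powr (1/5)))"
    proof -
      have "x / x powr (1/5) = x powr (1 - 1/5)" by (rule powr_div_self) (use x1 in simp)
      then have "x powr (4/5) = x / x powr (1/5)" by simp
      then show ?thesis by simp
    qed
    also have "\<dots> \<le> t" using M2 M1 x1 unfolding t_def x_def by (intro divide_left_mono) auto
    finally show ?thesis .
  qed
  have T2: "exp (- (t^2) / (2 * real m)) \<le> exp (- (x powr (7/10) / 10368))"
  proof -
    have "x powr (7/10) / 10368 = (x powr (4/5) / 72)^2 / (2 * p)"
    proof -
      have "(x powr (4/5))^2 = x powr (8/5)" using x1 by (simp add: powr_realpow[symmetric] powr_powr)
      moreover have "x powr (8/5) / p = x powr (7/10)" using x1 by (simp add: p_def powr_diff[symmetric])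
      ultimately show ?thesis by (simp add: power_divide)
    qed
    also have "\<dots> \<le> t^2 / (2 * real m)"
    proof (rule frac_le)
      show "0 \<le> t^2" by simp
      show "(x powr (4/5) / 72)^2 \<le> t^2" using tge x1 by (intro power_mono) auto
      show "0 < 2 * real m" using mpos by simp
      show "2 * real m \<le> 2 * p" using mle by simp
    qed
    finally show ?thesis by simp
  qed
  have Nle: "real N \<le> x powr (1/6)" unfolding N_def x_def by (rule NN_le[OF lnx \<delta>])
  have Npos: "real N \<ge> 1" using N1 by (simp add: N_def)
  have NN2: "real N * real N \<le> x powr (1/3)"
  proof -
    have "real N * real N \<le> x powr (1/6) * x powr (1/6)" using Nle Npos by (intro mult_mono) auto
    also have "\<dots> = x powr (1/3)" by (simp add: powr_add[symmetric])
    finally show ?thesis .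
  qed
  have T3: "exp (- (tau^2) / (2 * real d)) \<le> exp (- (x powr (2/3) / 128))"
  proof -
    have "tau^2 / (2 * real d) = x / (128 * (real N * real N))"
      unfolding tau_def x_def using x1 Npos by (simp add: power2_eq_square x_def field_simps)
    also have "x / (128 * (real N * real N)) \<ge> x / (128 * x powr (1/3))"
      using NN2 Npos x1 by (intro divide_left_mono) auto
    moreover have "x / (128 * x powr (1/3)) = x powr (2/3) / 128"
    proof -
      have "x / x powr (1/3) = x powr (1 - 1/3)" by (rule powr_div_self) (use x1 in simp)
      then have "x powr (2/3) = x / x powr (1/3)" by simp
      then show ?thesis by simp
    qed
    ultimately show ?thesis by simp
  qed
  have "real N * (exp (- (real d / (32 * real m))) + real M^2 * (2 * exp (- (t^2) / (2 * real m))))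
      \<le> x powr (1/6) * (exp (- (x powr (1/10) / 32)) + 9 * x powr (1/5) * (2 * exp (- (x powr (7/10) / 10368))))"
    using Nle Npos T1 T2 M2 by (intro mult_mono add_mono) auto
  moreover have "real N * real N * (2 * exp (- (tau^2) / (2 * real d))) \<le> x powr (1/3) * (2 * exp (- (x powr (2/3) / 128)))"
    using NN2 T3 by (intro mult_mono) auto
  ultimately show ?thesis unfolding Bnd_def by linarith
qed



lemma asym_ev:
  assumes "0 < \<delta>" "c > 0"
  shows "eventually (\<lambda>x::real. ln x \<ge> 4 \<and> x powr (\<delta>/6) / ln x ^ 4 \<ge> 1 \<and> x powr (9/10) \<ge> 2
            \<and> x \<ge> 2 \<and> x powr c * Bnd x \<le> 1) at_top"
proof -
  have l1: "filterlim (\<lambda>x::real. ln x) at_top at_top" by real_asymp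
  have l2: "filterlim (\<lambda>x::real. x powr (\<delta>/6) / ln x ^ 4) at_top at_top" using assms by real_asymp
  have l3: "filterlim (\<lambda>x::real. x powr (9/10)) at_top at_top" by real_asymp
  have l4: "((\<lambda>x::real. x powr c * Bnd x) \<longlongrightarrow> 0) at_top"
    unfolding Bnd_def using assms by real_asymp
  have "eventually (\<lambda>x::real. ln x \<ge> 4) at_top" using l1 by (simp add: filterlim_at_top)
  moreover have "eventually (\<lambda>x::real. x powr (\<delta>/6) / ln x ^ 4 \<ge> 1) at_top" using l2 by (simp add: filterlim_at_top)
  moreover have "eventually (\<lambda>x::real. x powr (9/10) \<ge> 2) at_top" using l3 by (simp add: filterlim_at_top)
  moreover have "eventually (\<lambda>x::real. x \<ge> 2) at_top" by (rule eventually_ge_at_top)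
  moreover have "eventually (\<lambda>x::real. x powr c * Bnd x < 1) at_top"
    using order_tendstoD(2)[OF l4, of 1] by simp
  ultimately show ?thesis by eventually_elim auto
qed

theorem lemma4p3:
  fixes \<delta> :: real
  assumes "0 < \<delta>" and "\<delta> < 1"
  shows "\<forall>c>0. \<exists>D. \<forall>d\<ge>D. even d \<longrightarrow> (\<forall>A\<in>sign_matrices d.
     measure_pmf.prob (pmf_of_set (sign_samples d (NN d \<delta>)))
       {s. \<exists>x\<in>unit_ball d. FAV d \<delta> A s x
             \<le> - (1 / (sqrt (real d) * LL d)) * (1 / (sqrt (real (NN d \<delta>)) * (ln (real d))^2))}
     \<ge> 1 - (real d) powr (-c))"
proof (intro allI impI)
  fix c :: real assume c: "c > 0"
  obtain D0 where D0: "\<And>x. x \<ge> D0 \<Longrightarrow> ln x \<ge> 4 \<and> x powr (\<delta>/6) / ln x ^ 4 \<ge> 1 \<and> x powr (9/10) \<ge> 2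
            \<and> x \<ge> 2 \<and> x powr c * Bnd x \<le> 1"
    using asym_ev[OF assms(1) c] unfolding eventually_at_top_linorder by blast
  show "\<exists>D. \<forall>d\<ge>D. even d \<longrightarrow> (\<forall>A\<in>sign_matrices d.
     measure_pmf.prob (pmf_of_set (sign_samples d (NN d \<delta>)))
       {s. \<exists>x\<in>unit_ball d. FAV d \<delta> A s x
             \<le> - (1 / (sqrt (real d) * LL d)) * (1 / (sqrt (real (NN d \<delta>)) * (ln (real d))^2))}
     \<ge> 1 - (real d) powr (-c))"
  proof (intro exI[of _ "nat \<lceil>D0\<rceil>"] allI impI ballI)
    fix d :: nat and A assume dD: "d \<ge> nat \<lceil>D0\<rceil>" and ev: "even d" and A: "A \<in> sign_matrices d"
    have "real d \<ge> D0" using dD by linarith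
    note H = D0[OF this]
    define x where "x = real d"
    have lnx: "ln x \<ge> 4" and nq: "x powr (\<delta>/6) / ln x ^ 4 \<ge> 1" and p9: "x powr (9/10) \<ge> 2"
      and x2: "x \<ge> 2" and Bx: "x powr c * Bnd x \<le> 1" using H by (auto simp: x_def)
    have d2: "d \<ge> 2" using x2 by (simp add: x_def)
    have N1: "NN d \<delta> \<ge> 1" using nq unfolding NN_def x_def by (simp add: le_nat_iff)
    have lnd: "(ln (real d))^2 \<ge> 12"
    proof -
      have "(4::real)^2 \<le> (ln (real d))^2" using lnx by (intro power_mono) (auto simp: x_def)
      then show ?thesis by simp
    qed
    define m where "m = nat \<lfloor>x powr (9/10)\<rfloor>"
    have m1: "m \<ge> 1" using p9 by (simp add: m_def le_nat_iff)
    have "measure_pmf.prob (pmf_of_set (sign_samples d (NN d \<delta>)))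
       {s. \<exists>x\<in>unit_ball d. FAV d \<delta> A s x
             \<le> - (1 / (sqrt (real d) * LL d)) * (1 / (sqrt (real (NN d \<delta>)) * (ln (real d))^2))}
     \<ge> 1 - (real (NN d \<delta>) * (exp (- (real d / (32 * real m))) + real (d div m + 1)^2 * (2 * exp (- ((real d / (8 * real (d div m + 1)^2))^2) / (2 * real m))))
            + real (NN d \<delta>) * real (NN d \<delta>) * (2 * exp (- ((real d / (8 * real (NN d \<delta>)))^2) / (2 * real d))))"
      by (rule prob_main[OF d2 N1 lnd m1])
    moreover have "real (NN d \<delta>) * (exp (- (real d / (32 * real m))) + real (d div m + 1)^2 * (2 * exp (- ((real d / (8 * real (d div m + 1)^2))^2) / (2 * real m))))
            + real (NN d \<delta>) * real (NN d \<delta>) * (2 * exp (- ((real d / (8 * real (NN d \<delta>)))^2) / (2 * real d))) \<le> Bnd x"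
      unfolding m_def x_def by (rule bound_real[OF assms p9[unfolded x_def]]) (use lnx N1 in \<open>auto simp: x_def\<close>)
    moreover have "Bnd x \<le> real d powr (-c)"
    proof -
      have xp: "x powr c > 0" using x2 by simp
      have "Bnd x \<le> 1 / x powr c" using Bx xp by (simp add: field_simps)
      also have "1 / x powr c = x powr (-c)" by (simp add: powr_minus_divide)
      finally show ?thesis by (simp add: x_def)
    qed
    ultimately show "measure_pmf.prob (pmf_of_set (sign_samples d (NN d \<delta>)))
       {s. \<exists>x\<in>unit_ball d. FAV d \<delta> A s x
             \<le> - (1 / (sqrt (real d) * LL d)) * (1 / (sqrt (real (NN d \<delta>)) * (ln (real d))^2))}
     \<ge> 1 - (real d) powr (-c)" by linarith
  qed
qed


end
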